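(* For every positive integer $N$ there exists a SudoQ of size $N^2\times N^2$ of maximal cardinality $N^4$, i.e. all of its $N^4$ entries are pairwise distinct (up to global phase).
   Context: A SudoQ of size $N^2\times N^2$ is an $N^2\times N^2$ array of unit vectors in $\mathbb{C}^{N^2}$ such that the entries of each row, each column, and each of the $N^2$ disjoint $N\times N$ blocks form an orthonormal basis of $\mathbb{C}^{N^2}$. Its cardinality is the number of distinct entries, vectors differing only by a global phase being considered equal. *)

theory Defs
  imports "HOL-Analysis.Analysis"
begin

text \<open>Vectors of C^d are represented as functions nat => complex, supported on {0..<d}.\<close>

definition cvec :: "nat \<Rightarrow> (nat \<Rightarrow> complex) \<Rightarrow> bool" where
  "cvec d v \<longleftrightarrow> (\<forall>k\<ge>d. v k = 0)"

definition cinner :: "nat \<Rightarrow> (nat \<Rightarrow> complex) \<Rightarrow> (nat \<Rightarrow> complex) \<Rightarrow> complex" where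
  "cinner d u v = (\<Sum>k<d. cnj (u k) * v k)"

definition is_onb :: "nat \<Rightarrow> 'i set \<Rightarrow> ('i \<Rightarrow> (nat \<Rightarrow> complex)) \<Rightarrow> bool" where
  "is_onb d I b \<longleftrightarrow>
     (\<forall>i\<in>I. cvec d (b i)) \<and>
     (\<forall>i\<in>I. \<forall>j\<in>I. cinner d (b i) (b j) = (if i = j then 1 else 0)) \<and>
     (\<forall>v. cvec d v \<longrightarrow> (\<exists>c. v = (\<lambda>k. \<Sum>i\<in>I. c i * b i k))) \<and>
     finite I"

definition is_sudoq :: "nat \<Rightarrow> (nat \<Rightarrow> nat \<Rightarrow> (nat \<Rightarrow> complex)) \<Rightarrow> bool" where
  "is_sudoq N S \<longleftrightarrow>
     (\<forall>r<N^2. is_onb (N^2) {..<N^2} (\<lambda>c. S r c)) \<and>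
     (\<forall>c<N^2. is_onb (N^2) {..<N^2} (\<lambda>r. S r c)) \<and>
     (\<forall>a<N. \<forall>b<N. is_onb (N^2) ({a*N..<a*N+N} \<times> {b*N..<b*N+N}) (\<lambda>(r,c). S r c))"

definition phase_eq :: "(nat \<Rightarrow> complex) \<Rightarrow> (nat \<Rightarrow> complex) \<Rightarrow> bool" where
  "phase_eq u v \<longleftrightarrow> (\<exists>z. cmod z = 1 \<and> u = (\<lambda>k. z * v k))"

definition sudoq_card :: "nat \<Rightarrow> (nat \<Rightarrow> nat \<Rightarrow> (nat \<Rightarrow> complex)) \<Rightarrow> nat" where
  "sudoq_card N S = card ({(r, c). r < N^2 \<and> c < N^2} //
      {((r,c),(r',c')). r < N^2 \<and> c < N^2 \<and> r' < N^2 \<and> c' < N^2 \<and> phase_eq (S r c) (S r' c')})"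

end

theory Submission imports Defs "HOL-Library.Real_Mod" "Jordan_Normal_Form.Determinant" begin
lemma onb_complete:
  fixes b :: "'i \<Rightarrow> nat \<Rightarrow> complex"
  assumes fin: "finite I" and cardI: "card I = d"
    and cv: "\<forall>i\<in>I. cvec d (b i)"
    and orth: "\<forall>i\<in>I. \<forall>j\<in>I. cinner d (b i) (b j) = (if i = j then 1 else 0)"
  shows "is_onb d I b"
proof -
  obtain e where e: "bij_betw e {..<d} I"
    using fin cardI by (metis bij_betw_from_nat_into_finite ex_bij_betw_nat_finite lessThan_atLeast0)
  define B :: "complex mat" where "B = Matrix.mat d d (\<lambda>(k,j). b (e j) k)"
  define H :: "complex mat" where "H = Matrix.mat d d (\<lambda>(j,k). cnj (b (e j) k))"
  have einj: "\<And>j j'. j < d \<Longrightarrow> j' < d \<Longrightarrow> e j = e j' \<longleftrightarrow> j = j'"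
    using e unfolding bij_betw_def inj_on_def by auto
  have ein: "\<And>j. j < d \<Longrightarrow> e j \<in> I" using e unfolding bij_betw_def by auto
  have HB: "H * B = 1\<^sub>m d"
  proof (rule eq_matI)
    fix j j' assume j: "j < dim_row (1\<^sub>m d)" and j': "j' < dim_col (1\<^sub>m d)"
    have "(H * B) $$ (j, j') = (\<Sum>k<d. cnj (b (e j) k) * b (e j') k)"
      using j j' unfolding H_def B_def by (simp add: scalar_prod_def lessThan_atLeast0)
    also have "\<dots> = cinner d (b (e j)) (b (e j'))" by (simp add: cinner_def)
    also have "\<dots> = (if j = j' then 1 else 0)" using orth ein einj j j' by simp
    finally show "(H * B) $$ (j, j') = 1\<^sub>m d $$ (j, j')" using j j' by simp
  qed (auto simp: H_def B_def)
  have BH: "B * H = 1\<^sub>m d"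
    by (rule mat_mult_left_right_inverse[OF _ _ HB]) (auto simp: H_def B_def)
  have compl: "(\<Sum>j<d. b (e j) k * cnj (b (e j) k')) = (if k = k' then 1 else 0)"
    if "k < d" "k' < d" for k k'
  proof -
    have "(B * H) $$ (k, k') = (\<Sum>j<d. b (e j) k * cnj (b (e j) k'))"
      using that unfolding H_def B_def by (simp add: scalar_prod_def lessThan_atLeast0)
    then show ?thesis using BH that by simp
  qed
  have span: "\<exists>c. v = (\<lambda>k. \<Sum>i\<in>I. c i * b i k)" if v: "cvec d v" for v
  proof (intro exI ext)
    fix k
    let ?c = "\<lambda>i. cinner d (b i) v"
    have re: "(\<Sum>i\<in>I. ?c i * b i k) = (\<Sum>j<d. ?c (e j) * b (e j) k)"
      using sum.reindex_bij_betw[OF e, of "\<lambda>i. ?c i * b i k"] by simp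
    show "v k = (\<Sum>i\<in>I. ?c i * b i k)"
    proof (cases "k < d")
      case False
      then have "v k = 0" using v by (simp add: cvec_def)
      moreover have "\<forall>i\<in>I. b i k = 0" using cv False by (simp add: cvec_def)
      ultimately show ?thesis by simp
    next
      case True
      have "(\<Sum>j<d. ?c (e j) * b (e j) k) = (\<Sum>j<d. \<Sum>k'<d. v k' * (b (e j) k * cnj (b (e j) k')))"
        by (simp add: cinner_def sum_distrib_left sum_distrib_right mult_ac)
      also have "\<dots> = (\<Sum>k'<d. v k' * (\<Sum>j<d. b (e j) k * cnj (b (e j) k')))"
        by (subst sum.swap) (simp add: sum_distrib_left)
      also have "\<dots> = (\<Sum>k'<d. v k' * (if k = k' then 1 else 0))"
        using compl True by simp
      also have "\<dots> = (\<Sum>k'<d. if k = k' then v k' else 0)" by (rule sum.cong) auto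
      also have "\<dots> = v k" using True by simp
      finally show ?thesis using re by simp
    qed
  qed
  show ?thesis unfolding is_onb_def using cv orth span fin by blast
qed

definition EE :: "nat \<Rightarrow> nat \<Rightarrow> complex" where
  "EE M n = cis (2 * pi * real n / real M)"
definition PP :: "nat \<Rightarrow> nat \<Rightarrow> nat \<Rightarrow> nat \<Rightarrow> complex" where
  "PP N x i m = EE (N^2) (m * (i*N + x)) / complex_of_real (sqrt (real N))"
definition fac :: "nat \<Rightarrow> nat \<Rightarrow> nat \<Rightarrow> nat \<Rightarrow> nat \<Rightarrow> complex" where
  "fac N x i x' i' = (\<Sum>m<N. cnj (PP N x i m) * PP N x' i' m)"
definition SQ :: "nat \<Rightarrow> nat \<Rightarrow> nat \<Rightarrow> nat \<Rightarrow> complex" where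
  "SQ N r c k = (if k < N^2 then PP N (r div N) ((r mod N + c div N) mod N) (k div N)
      * PP N (c div N) ((r div N + c mod N) mod N) (k mod N) else 0)"

lemma cis_int_one:
  fixes t :: int and M :: nat
  assumes M: "M > 0" and t: "\<bar>t\<bar> < int M" and h: "cis (2 * pi * of_int t / real M) = 1"
  shows "t = 0"
proof -
  from h obtain n :: int where n: "2 * pi * of_int t / real M = of_int n * (2 * pi)"
    using cis_eq_1_iff by blast
  then have "real_of_int t = real_of_int (n * int M)" using M by (simp add: field_simps)
  then have tn: "t = n * int M" by linarith
  show ?thesis
  proof (rule ccontr)
    assume "t \<noteq> 0"
    then have "n \<noteq> 0" using tn by simp
    then have "\<bar>n * int M\<bar> \<ge> int M" using M by (simp add: abs_mult)
    then show False using t tn by simp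
  qed
qed

lemma EE_inj:
  assumes M: "M > 0" and a: "a < M" and b: "b < M" and h: "EE M a = EE M b"
  shows "a = b"
proof -
  have "EE M a / EE M b = 1" using h by (simp add: EE_def)
  then have "cis (2 * pi * of_int (int a - int b) / real M) = 1"
    by (simp add: EE_def cis_divide diff_divide_distrib right_diff_distrib)
  then have "int a - int b = 0" using a b by (intro cis_int_one[OF M]) auto
  then show ?thesis by simp
qed


lemma sum_split:
  fixes h :: "nat \<Rightarrow> 'a::comm_monoid_add"
  shows "(\<Sum>k<a*N. h k) = (\<Sum>k1<a. \<Sum>k2<N. h (k1*N+k2))"
proof -
  have "(\<Sum>k2<N. h (k1*N+k2)) = sum h {k1*N..<k1*N+N}" for k1
    using sum.shift_bounds_nat_ivl[of h 0 "k1*N" N] by (simp add: atLeast0LessThan add.commute)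
  then show ?thesis using sum.nat_group[of h N a] by simp
qed
lemma cnj_PP_mult:
  assumes N: "N > 0"
  shows "cnj (PP N x i m) * PP N x i' m = cis (real m * (2 * pi * (real i' - real i) / real N)) / of_nat N"
proof -
  have s: "complex_of_real (sqrt (real N)) * complex_of_real (sqrt (real N)) = of_nat N"
    by (simp flip: of_real_mult)
  have "cnj (PP N x i m) * PP N x i' m
      = cis (- (2 * pi * real (m * (i * N + x)) / real (N^2)) + 2 * pi * real (m * (i' * N + x)) / real (N^2))
        / (complex_of_real (sqrt (real N)) * complex_of_real (sqrt (real N)))"
    by (simp add: PP_def EE_def cis_cnj cis_mult)
  also have "- (2 * pi * real (m * (i * N + x)) / real (N^2)) + 2 * pi * real (m * (i' * N + x)) / real (N^2)
      = real m * (2 * pi * (real i' - real i) / real N)"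
  proof -
    have e: "real (m * (i' * N + x)) - real (m * (i * N + x)) = real m * real N * (real i' - real i)"
      by (simp add: algebra_simps)
    have "- (2 * pi * real (m * (i * N + x)) / real (N^2)) + 2 * pi * real (m * (i' * N + x)) / real (N^2)
        = 2 * pi * (real (m * (i' * N + x)) - real (m * (i * N + x))) / (real N * real N)"
      by (simp add: power2_eq_square diff_divide_distrib right_diff_distrib)
    also have "\<dots> = 2 * pi * (real m * real N * (real i' - real i)) / (real N * real N)" by (simp only: e)
    also have "\<dots> = real m * (2 * pi * (real i' - real i) / real N)" using N by simp
    finally show ?thesis .
  qed
  finally show ?thesis using s by simp
qed

lemma fac_same:
  assumes N: "N > 0" and i: "i < N" and i': "i' < N"
  shows "fac N x i x i' = (if i = i' then 1 else 0)"
proof -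
  define w where "w = cis (2 * pi * (real i' - real i) / real N)"
  have "fac N x i x i' = (\<Sum>m<N. w ^ m / of_nat N)"
    unfolding fac_def w_def by (rule sum.cong[OF refl]) (simp only: cnj_PP_mult[OF N] Complex.DeMoivre)
  also have "\<dots> = (\<Sum>m<N. w ^ m) / of_nat N" by (simp add: sum_divide_distrib)
  finally have f: "fac N x i x i' = (\<Sum>m<N. w ^ m) / of_nat N" .
  show ?thesis
  proof (cases "i = i'")
    case True
    then have "w = 1" by (simp add: w_def)
    then show ?thesis using f N True by simp
  next
    case False
    have "w \<noteq> 1"
    proof
      assume "w = 1"
      then have "cis (2 * pi * of_int (int i' - int i) / real N) = 1" by (simp add: w_def)
      then have "int i' - int i = 0" using i i' by (intro cis_int_one[OF N]) auto
      then show False using False by simp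
    qed
    moreover have "w ^ N = 1"
    proof -
      have "w ^ N = cis (real N * (2 * pi * (real i' - real i) / real N))"
        by (simp only: w_def Complex.DeMoivre)
      also have "\<dots> = cis (2 * pi * of_int (int i' - int i))"
        using N by simp
      also have "\<dots> = 1" by (rule cis_multiple_2pi) simp
      finally show ?thesis .
    qed
    ultimately have "(\<Sum>m<N. w ^ m) = 0" by (simp add: geometric_sum)
    then show ?thesis using f False by simp
  qed
qed
lemma mod_cancel: fixes a b b' N :: nat assumes "b < N" "b' < N" "(a + b) mod N = (a + b') mod N" shows "b = b'"
proof -
  have "int ((a + b) mod N) = int ((a + b') mod N)" using assms(3) by simp
  then have "(int a + int b) mod int N = (int a + int b') mod int N" by (simp add: zmod_int)
  then have "int N dvd (int a + int b) - (int a + int b')" by (simp only: mod_eq_dvd_iff)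
  then have d: "int N dvd int b - int b'" by simp
  show ?thesis
  proof (rule ccontr)
    assume "b \<noteq> b'"
    then have "int b - int b' \<noteq> 0" by simp
    from dvd_imp_le_int[OF this d] assms(1,2) show False by simp
  qed
qed
lemma lin_inj: fixes a b a' b' N :: nat assumes "b < N" "b' < N" "a*N + b = a'*N + b'" shows "a = a' \<and> b = b'"
proof -
  have "(a*N + b) div N = a" "(a*N+b) mod N = b" "(a'*N + b') div N = a'" "(a'*N+b') mod N = b'" using assms(1,2) by auto
  then show ?thesis using assms(3) by metis
qed

lemma inner_SQ:
  assumes N: "N > 0"
  shows "cinner (N^2) (SQ N r c) (SQ N r' c') =
    fac N (r div N) ((r mod N + c div N) mod N) (r' div N) ((r' mod N + c' div N) mod N) *
    fac N (c div N) ((r div N + c mod N) mod N) (c' div N) ((r' div N + c' mod N) mod N)"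
proof -
  let ?f = "\<lambda>k. cnj (SQ N r c k) * SQ N r' c' k"
  let ?A = "\<lambda>k1. cnj (PP N (r div N) ((r mod N + c div N) mod N) k1) * PP N (r' div N) ((r' mod N + c' div N) mod N) k1"
  let ?B = "\<lambda>k2. cnj (PP N (c div N) ((r div N + c mod N) mod N) k2) * PP N (c' div N) ((r' div N + c' mod N) mod N) k2"
  have "cinner (N^2) (SQ N r c) (SQ N r' c') = (\<Sum>k<N*N. ?f k)"
    by (simp add: cinner_def power2_eq_square)
  also have "\<dots> = (\<Sum>k1<N. \<Sum>k2<N. ?f (k1*N+k2))" by (rule sum_split)
  also have "\<dots> = (\<Sum>k1<N. \<Sum>k2<N. ?A k1 * ?B k2)"
  proof (intro sum.cong refl)
    fix k1 k2 assume k1: "k1 \<in> {..<N}" and k2: "k2 \<in> {..<N}"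
    have lt: "k1*N+k2 < N^2"
    proof -
      have "k1*N+k2 < k1*N + N" using k2 by simp
      also have "\<dots> = (k1+1)*N" by simp
      also have "\<dots> \<le> N*N" using k1 by (intro mult_right_mono) auto
      finally show ?thesis by (simp add: power2_eq_square)
    qed
    have dm: "(k1*N+k2) div N = k1" "(k1*N+k2) mod N = k2" using k2 by auto
    show "?f (k1*N+k2) = ?A k1 * ?B k2"
      unfolding SQ_def using lt dm by (simp add: mult_ac)
  qed
  also have "\<dots> = (\<Sum>k1<N. ?A k1) * (\<Sum>k2<N. ?B k2)"
    by (simp add: sum_product)
  also have "\<dots> = fac N (r div N) ((r mod N + c div N) mod N) (r' div N) ((r' mod N + c' div N) mod N) *
    fac N (c div N) ((r div N + c mod N) mod N) (c' div N) ((r' div N + c' mod N) mod N)"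
    unfolding fac_def ..
  finally show ?thesis .
qed

lemma inner_crit:
  assumes N: "N > 0"
    and crit: "(r, c) \<noteq> (r', c') \<Longrightarrow>
      (r div N = r' div N \<and> (r mod N + c div N) mod N \<noteq> (r' mod N + c' div N) mod N) \<or>
      (c div N = c' div N \<and> (r div N + c mod N) mod N \<noteq> (r' div N + c' mod N) mod N)"
  shows "cinner (N^2) (SQ N r c) (SQ N r' c') = (if (r, c) = (r', c') then 1 else 0)"
proof (cases "(r, c) = (r', c')")
  case True
  then show ?thesis using N by (simp add: inner_SQ fac_same)
next
  case False
  then show ?thesis using crit N by (auto simp: inner_SQ fac_same)
qed
lemma mc1: fixes a x y N :: nat shows "x < N \<Longrightarrow> y < N \<Longrightarrow> x \<noteq> y \<Longrightarrow> (a + x) mod N \<noteq> (a + y) mod N"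
  using mod_cancel by blast
lemma mc2: fixes a x y N :: nat shows "x < N \<Longrightarrow> y < N \<Longrightarrow> x \<noteq> y \<Longrightarrow> (x + a) mod N \<noteq> (y + a) mod N"
  by (metis add.commute mod_cancel)
lemma dm_eq: fixes r r' N :: nat shows "r div N = r' div N \<Longrightarrow> r mod N = r' mod N \<Longrightarrow> r = r'"
  by (metis div_mult_mod_eq)
lemma div_lt: fixes r N :: nat shows "r < N^2 \<Longrightarrow> r div N < N"
  by (simp add: less_mult_imp_div_less power2_eq_square)

lemma cvec_SQ: "cvec (N^2) (SQ N r c)"
  by (simp add: cvec_def SQ_def)

lemma row_onb:
  assumes N: "N > 0" and r: "r < N^2"
  shows "is_onb (N^2) {..<N^2} (\<lambda>c. SQ N r c)"
proof (rule onb_complete)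
  show "\<forall>c\<in>{..<N^2}. \<forall>c'\<in>{..<N^2}. cinner (N^2) (SQ N r c) (SQ N r c') = (if c = c' then 1 else 0)"
  proof (intro ballI)
    fix c c' assume c: "c \<in> {..<N^2}" and c': "c' \<in> {..<N^2}"
    have "cinner (N^2) (SQ N r c) (SQ N r c') = (if (r, c) = (r, c') then 1 else 0)"
    proof (rule inner_crit[OF N])
      assume ne: "(r, c) \<noteq> (r, c')"
      show "(r div N = r div N \<and> (r mod N + c div N) mod N \<noteq> (r mod N + c' div N) mod N) \<or>
        (c div N = c' div N \<and> (r div N + c mod N) mod N \<noteq> (r div N + c' mod N) mod N)"
      proof (cases "(r mod N + c div N) mod N = (r mod N + c' div N) mod N")
        case True
        then have "c div N = c' div N" using mod_cancel div_lt c c' by blast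
        moreover then have "c mod N \<noteq> c' mod N" using ne dm_eq by blast
        ultimately show ?thesis using mc1 N by simp
      qed simp
    qed
    then show "cinner (N^2) (SQ N r c) (SQ N r c') = (if c = c' then 1 else 0)" by simp
  qed
qed (auto simp: cvec_SQ)

lemma col_onb:
  assumes N: "N > 0" and c: "c < N^2"
  shows "is_onb (N^2) {..<N^2} (\<lambda>r. SQ N r c)"
proof (rule onb_complete)
  show "\<forall>r\<in>{..<N^2}. \<forall>r'\<in>{..<N^2}. cinner (N^2) (SQ N r c) (SQ N r' c) = (if r = r' then 1 else 0)"
  proof (intro ballI)
    fix r r' assume r: "r \<in> {..<N^2}" and r': "r' \<in> {..<N^2}"
    have "cinner (N^2) (SQ N r c) (SQ N r' c) = (if (r, c) = (r', c) then 1 else 0)"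
    proof (rule inner_crit[OF N])
      assume ne: "(r, c) \<noteq> (r', c)"
      show "(r div N = r' div N \<and> (r mod N + c div N) mod N \<noteq> (r' mod N + c div N) mod N) \<or>
        (c div N = c div N \<and> (r div N + c mod N) mod N \<noteq> (r' div N + c mod N) mod N)"
      proof (cases "r div N = r' div N")
        case True
        then have "r mod N \<noteq> r' mod N" using ne dm_eq by blast
        then show ?thesis using mc2 N True by simp
      next
        case False
        then show ?thesis using mc2 div_lt r r' by simp
      qed
    qed
    then show "cinner (N^2) (SQ N r c) (SQ N r' c) = (if r = r' then 1 else 0)" by simp
  qed
qed (auto simp: cvec_SQ)

lemma blk_div: fixes a N r :: nat shows "r \<in> {a*N..<a*N+N} \<Longrightarrow> r div N = a"
  by (auto intro: div_nat_eqI simp: mult.commute)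

lemma blk_onb:
  assumes N: "N > 0" and a: "a < N" and b: "b < N"
  shows "is_onb (N^2) ({a*N..<a*N+N} \<times> {b*N..<b*N+N}) (\<lambda>(r,c). SQ N r c)"
proof (rule onb_complete)
  show "card ({a*N..<a*N+N} \<times> {b*N..<b*N+N}) = N^2" by (simp add: card_cartesian_product power2_eq_square)
  show "\<forall>p\<in>{a*N..<a*N+N} \<times> {b*N..<b*N+N}. \<forall>q\<in>{a*N..<a*N+N} \<times> {b*N..<b*N+N}.
     cinner (N^2) ((\<lambda>(r,c). SQ N r c) p) ((\<lambda>(r,c). SQ N r c) q) = (if p = q then 1 else 0)"
  proof (intro ballI)
    fix p q assume p: "p \<in> {a*N..<a*N+N} \<times> {b*N..<b*N+N}" and q: "q \<in> {a*N..<a*N+N} \<times> {b*N..<b*N+N}"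
    obtain r c where rc: "p = (r, c)" by (cases p)
    obtain r' c' where rc': "q = (r', c')" by (cases q)
    have d: "r div N = a" "r' div N = a" "c div N = b" "c' div N = b"
      using p q rc rc' blk_div by auto
    have "cinner (N^2) (SQ N r c) (SQ N r' c') = (if (r, c) = (r', c') then 1 else 0)"
    proof (rule inner_crit[OF N])
      assume ne: "(r, c) \<noteq> (r', c')"
      show "(r div N = r' div N \<and> (r mod N + c div N) mod N \<noteq> (r' mod N + c' div N) mod N) \<or>
        (c div N = c' div N \<and> (r div N + c mod N) mod N \<noteq> (r' div N + c' mod N) mod N)"
      proof (cases "r mod N = r' mod N")
        case True
        then have "c mod N \<noteq> c' mod N" using ne dm_eq d by (metis prod.inject)
        then show ?thesis using mc1 N d by simp
      next
        case False
        then show ?thesis using mc2 N d by simp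
      qed
    qed
    then show "cinner (N^2) ((\<lambda>(r,c). SQ N r c) p) ((\<lambda>(r,c). SQ N r c) q) = (if p = q then 1 else 0)"
      using rc rc' by simp
  qed
qed (auto simp: cvec_SQ)

lemma is_sudoq_SQ: assumes N: "N > 0" shows "is_sudoq N (SQ N)"
  unfolding is_sudoq_def using row_onb[OF N] col_onb[OF N] blk_onb[OF N] by auto
lemma sqrt_sq_c: "complex_of_real (sqrt (real N)) * complex_of_real (sqrt (real N)) = of_nat N"
  by (simp flip: of_real_mult)

lemma EE0: "EE M 0 = 1" by (simp add: EE_def)

lemma PP0: "PP N x i 0 = 1 / complex_of_real (sqrt (real N))"
  by (simp add: PP_def EE_def)

lemma lt_sq: fixes x y N :: nat shows "x < N \<Longrightarrow> y < N \<Longrightarrow> x*N+y < N^2"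
proof -
  assume x: "x < N" and y: "y < N"
  have "x*N+y < x*N + N" using y by simp
  also have "\<dots> = (x+1)*N" by simp
  also have "\<dots> \<le> N*N" using x by (intro mult_right_mono) auto
  finally show ?thesis by (simp add: power2_eq_square)
qed

lemma SQ_0: "N > 0 \<Longrightarrow> SQ N r c 0 = 1 / of_nat N"
  by (simp add: SQ_def PP0 sqrt_sq_c)

lemma SQ_1: assumes "N \<ge> 2"
  shows "SQ N r c 1 = EE (N^2) (((r div N + c mod N) mod N)*N + c div N) / of_nat N"
proof -
  have "1 < N^2" using assms by (metis less_le_trans one_less_power pos2 power_one_right Suc_1 Suc_le_eq nat_less_le one_less_numeral_iff semiring_norm(76))
  moreover have "1 div N = 0" "1 mod N = 1" using assms by auto
  ultimately show ?thesis by (simp add: SQ_def PP0 PP_def EE0 sqrt_sq_c[symmetric])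
qed

lemma SQ_N: assumes "N \<ge> 2"
  shows "SQ N r c N = EE (N^2) (((r mod N + c div N) mod N)*N + r div N) / of_nat N"
proof -
  have "N < N^2" using assms by (simp add: power2_eq_square)
  moreover have "N div N = 1" "N mod N = 0" using assms by auto
  ultimately show ?thesis by (simp add: SQ_def PP0 PP_def EE0 sqrt_sq_c[symmetric])
qed

lemma phase_inj:
  assumes N: "N \<ge> 1" and r: "r < N^2" and c: "c < N^2" and r': "r' < N^2" and c': "c' < N^2"
    and ph: "phase_eq (SQ N r c) (SQ N r' c')"
  shows "r = r' \<and> c = c'"
proof (cases "N = 1")
  case True
  then show ?thesis using r c r' c' by simp
next
  case False
  then have N2: "N \<ge> 2" using N by simp
  then have N0: "N > 0" by simp
  from ph obtain z where z: "SQ N r c = (\<lambda>k. z * SQ N r' c' k)" unfolding phase_eq_def by blast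
  from fun_cong[OF z, of 0] have "z = 1" using N0 by (simp add: SQ_0)
  with z have eq: "SQ N r c = SQ N r' c'" by simp
  have m: "x mod N < N" for x using N0 by simp
  have "SQ N r c 1 = SQ N r' c' 1" using eq by simp
  then have "EE (N^2) (((r div N + c mod N) mod N)*N + c div N) / of_nat N =
      EE (N^2) (((r' div N + c' mod N) mod N)*N + c' div N) / of_nat N"
    by (simp only: SQ_1[OF N2])
  then have "EE (N^2) (((r div N + c mod N) mod N)*N + c div N) =
      EE (N^2) (((r' div N + c' mod N) mod N)*N + c' div N)"
    using N0 by simp
  then have "((r div N + c mod N) mod N)*N + c div N = ((r' div N + c' mod N) mod N)*N + c' div N"
    using N0 lt_sq[OF m div_lt[OF c]] lt_sq[OF m div_lt[OF c']] by (intro EE_inj) auto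
  then have e1: "(r div N + c mod N) mod N = (r' div N + c' mod N) mod N" "c div N = c' div N"
    using lin_inj div_lt[OF c] div_lt[OF c'] by blast+
  have "SQ N r c N = SQ N r' c' N" using eq by simp
  then have "EE (N^2) (((r mod N + c div N) mod N)*N + r div N) / of_nat N =
      EE (N^2) (((r' mod N + c' div N) mod N)*N + r' div N) / of_nat N"
    by (simp only: SQ_N[OF N2])
  then have "EE (N^2) (((r mod N + c div N) mod N)*N + r div N) =
      EE (N^2) (((r' mod N + c' div N) mod N)*N + r' div N)"
    using N0 by simp
  then have "((r mod N + c div N) mod N)*N + r div N = ((r' mod N + c' div N) mod N)*N + r' div N"
    using N0 lt_sq[OF m div_lt[OF r]] lt_sq[OF m div_lt[OF r']] by (intro EE_inj) auto
  then have e2: "(r mod N + c div N) mod N = (r' mod N + c' div N) mod N" "r div N = r' div N"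
    using lin_inj div_lt[OF r] div_lt[OF r'] by blast+
  have "r mod N = r' mod N" using e1(2) e2(1) mod_cancel[of "r mod N" N "r' mod N" "c div N"] m
    by (simp add: add.commute)
  moreover have "c mod N = c' mod N" using e1(1) e2(2) mod_cancel[of "c mod N" N "c' mod N" "r div N"] m
    by simp
  ultimately show ?thesis using e1(2) e2(2) dm_eq by blast
qed

lemma card_SQ:
  assumes N: "N \<ge> 1"
  shows "sudoq_card N (SQ N) = N^4"
proof -
  let ?A = "{(r, c). r < N^2 \<and> c < N^2}"
  let ?R = "{((r,c),(r',c')). r < N^2 \<and> c < N^2 \<and> r' < N^2 \<and> c' < N^2 \<and> phase_eq (SQ N r c) (SQ N r' c')}"
  have cls: "?R `` {p} = {p}" if p: "p \<in> ?A" for p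
  proof -
    obtain r c where rc: "p = (r, c)" by (cases p)
    have refl: "phase_eq (SQ N r c) (SQ N r c)" unfolding phase_eq_def by (intro exI[of _ 1]) simp
    show ?thesis using p rc refl phase_inj[OF N] by auto
  qed
  have "?A // ?R = (\<lambda>p. {p}) ` ?A"
    unfolding quotient_def using cls by auto
  then have "card (?A // ?R) = card ?A" by (simp add: card_image)
  moreover have "?A = {..<N^2} \<times> {..<N^2}" by auto
  moreover have "card ({..<N^2} \<times> {..<N^2}) = N^4" by (simp add: card_cartesian_product flip: power_add)
  ultimately show ?thesis unfolding sudoq_card_def by simp
qed

theorem mainTheorem19:
  fixes N :: nat
  assumes "N \<ge> 1"
  shows "\<exists>S. is_sudoq N S \<and> sudoq_card N S = N^4"
  using is_sudoq_SQ card_SQ assms by (intro exI[of _ "SQ N"]) auto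
end
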